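(* Let $T$ be a tree and $x\in\mathsf L_T$. Let $S\subset T$ be the subgraph with vertices those $\alpha\in V(T)$ with $x\in\mathsf L_T(\alpha)$, and edges those $\{\alpha,\beta\}\in E(T)$ with both $\alpha,\beta$ such vertices. Then $S$ is a tree.
   Context: A tree is a nonempty finite connected acyclic graph with vertex set $V(T)$ and edge set $E(T)$ (two-element subsets of $V(T)$). Arboreal singularity: for $\alpha\in V(T)$ let $\mathsf L_T(\alpha)=\mathbb R^{V(T)\setminus\{\alpha\}}$ with coordinates $x_\gamma(\alpha)$; $\mathsf L_T$ is the quotient of $\coprod_\alpha\mathsf L_T(\alpha)$ by the equivalence relation generated by identifying, for each edge $\{\alpha,\beta\}$, $\{x_\gamma(\alpha)\}\sim\{x_\gamma(\beta)\}$ whenever $x_\beta(\alpha)=x_\alpha(\beta)\ge0$ and $x_\gamma(\alpha)=x_\gamma(\beta)$ for $\gamma\ne\alpha,\beta$; each $\mathsf L_T(\alpha)$ is regarded as a subspace of $\mathsf L_T$. *)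

theory Defs
  imports Complex_Main "HOL-Library.FuncSet"
begin

definition is_graph :: "'a set \<Rightarrow> 'a set set \<Rightarrow> bool" where
  "is_graph V E \<longleftrightarrow> (\<forall>e\<in>E. \<exists>a b. e = {a, b} \<and> a \<in> V \<and> b \<in> V \<and> a \<noteq> b)"

definition walk :: "'a set set \<Rightarrow> 'a list \<Rightarrow> bool" where
  "walk E xs \<longleftrightarrow> xs \<noteq> [] \<and> (\<forall>i. Suc i < length xs \<longrightarrow> {xs ! i, xs ! Suc i} \<in> E)"

definition graph_connected :: "'a set \<Rightarrow> 'a set set \<Rightarrow> bool" where
  "graph_connected V E \<longleftrightarrow>
     (\<forall>a\<in>V. \<forall>b\<in>V. \<exists>xs. walk E xs \<and> set xs \<subseteq> V \<and> hd xs = a \<and> last xs = b)"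

definition is_cycle :: "'a set set \<Rightarrow> 'a list \<Rightarrow> bool" where
  "is_cycle E xs \<longleftrightarrow> length xs \<ge> 3 \<and> distinct xs \<and> walk E xs \<and> {last xs, hd xs} \<in> E"

definition graph_acyclic :: "'a set set \<Rightarrow> bool" where
  "graph_acyclic E \<longleftrightarrow> \<not> (\<exists>xs. is_cycle E xs)"

definition is_tree :: "'a set \<Rightarrow> 'a set set \<Rightarrow> bool" where
  "is_tree V E \<longleftrightarrow> finite V \<and> V \<noteq> {} \<and> is_graph V E \<and> graph_connected V E \<and> graph_acyclic E"

text \<open>Arboreal singularity. A point of the chart L_T(alpha) = R^(V - {alpha}) is a pair
  (alpha, x) with x an extensional function on V - {alpha}; x gamma is the coordinate x_gamma(alpha).\<close>

definition arb_carrier :: "'a set \<Rightarrow> ('a \<times> ('a \<Rightarrow> real)) set" where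
  "arb_carrier V = {(\<alpha>, x). \<alpha> \<in> V \<and> x \<in> extensional (V - {\<alpha>})}"

definition arb_ident :: "'a set \<Rightarrow> 'a set set \<Rightarrow> (('a \<times> ('a \<Rightarrow> real)) \<times> ('a \<times> ('a \<Rightarrow> real))) set" where
  "arb_ident V E = {((\<alpha>, x), (\<beta>, y)).
      {\<alpha>, \<beta>} \<in> E \<and> (\<alpha>, x) \<in> arb_carrier V \<and> (\<beta>, y) \<in> arb_carrier V \<and>
      x \<beta> = y \<alpha> \<and> x \<beta> \<ge> 0 \<and> (\<forall>\<gamma>\<in>V - {\<alpha>, \<beta>}. x \<gamma> = y \<gamma>)}"

definition arb_rel :: "'a set \<Rightarrow> 'a set set \<Rightarrow> (('a \<times> ('a \<Rightarrow> real)) \<times> ('a \<times> ('a \<Rightarrow> real))) set" where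
  "arb_rel V E = Id_on (arb_carrier V) \<union> (arb_ident V E \<union> (arb_ident V E)\<inverse>)\<^sup>+"

definition arb_sing :: "'a set \<Rightarrow> 'a set set \<Rightarrow> ('a \<times> ('a \<Rightarrow> real)) set set" where
  "arb_sing V E = arb_carrier V // arb_rel V E"

definition in_chart :: "('a \<times> ('a \<Rightarrow> real)) set \<Rightarrow> 'a \<Rightarrow> bool" where
  "in_chart p \<alpha> \<longleftrightarrow> (\<exists>x. (\<alpha>, x) \<in> p)"

end

theory Submission
  imports Defs
begin

lemma S_step:
  assumes "(u,w) \<in> arb_ident V E \<union> (arb_ident V E)\<inverse>"
  shows "{fst u, fst w} \<in> E \<and> u \<in> arb_carrier V \<and> w \<in> arb_carrier V"
  using assms by (auto simp: arb_ident_def insert_commute)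

lemma carrier_fst: "u \<in> arb_carrier V \<Longrightarrow> fst u \<in> V"
  by (auto simp: arb_carrier_def)

lemma rtr_walk:
  assumes "(a,b) \<in> R\<^sup>*" and "R = {(a,b). {a,b} \<in> Es}" and "\<forall>e\<in>Es. e \<subseteq> W" and "a \<in> W"
  shows "\<exists>xs. walk Es xs \<and> set xs \<subseteq> W \<and> hd xs = a \<and> last xs = b"
  using assms(1)
proof (induction rule: rtrancl_induct)
  case base
  then show ?case using assms(4) by (intro exI[of _ "[a]"]) (auto simp: walk_def)
next
  case (step y z)
  then obtain xs where xs: "walk Es xs" "set xs \<subseteq> W" "hd xs = a" "last xs = y" by blast
  have e: "{y,z} \<in> Es" using step(2) assms(2) by auto
  hence zW: "z \<in> W" using assms(3) by auto
  have "walk Es (xs @ [z])"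
    unfolding walk_def
  proof (intro conjI allI impI)
    fix i assume i: "Suc i < length (xs @ [z])"
    show "{(xs @ [z]) ! i, (xs @ [z]) ! Suc i} \<in> Es"
    proof (cases "Suc i < length xs")
      case True
      then show ?thesis using xs(1) by (auto simp: walk_def nth_append)
    next
      case False
      hence "Suc i = length xs" using i by simp
      moreover have "xs \<noteq> []" using xs(1) by (simp add: walk_def)
      ultimately have "i = length xs - 1" by simp
      thus ?thesis using e xs(4) \<open>xs \<noteq> []\<close> \<open>Suc i = length xs\<close>
        by (auto simp: nth_append last_conv_nth)
    qed
  qed simp
  then show ?case using xs zW by (intro exI[of _ "xs @ [z]"]) (auto simp: walk_def)
qed

theorem lemma2p10:
  fixes V :: "'a set" and E :: "'a set set" and p :: "('a \<times> ('a \<Rightarrow> real)) set"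
  assumes "is_tree V E"
    and "p \<in> arb_sing V E"
  shows "is_tree {\<alpha> \<in> V. in_chart p \<alpha>}
                 {e \<in> E. \<forall>\<alpha>\<in>e. \<alpha> \<in> V \<and> in_chart p \<alpha>}"
proof -
  define W where "W = {\<alpha> \<in> V. in_chart p \<alpha>}"
  define Es where "Es = {e \<in> E. \<forall>\<alpha>\<in>e. \<alpha> \<in> V \<and> in_chart p \<alpha>}"
  define S where "S = arb_ident V E \<union> (arb_ident V E)\<inverse>"
  define R where "R = {(a,b). {a,b} \<in> Es}"
  obtain c where c: "c \<in> arb_carrier V" and pc: "p = arb_rel V E `` {c}"
    using assms(2) by (auto simp: arb_sing_def quotient_def)
  have inp: "v \<in> p \<longleftrightarrow> (c,v) \<in> arb_rel V E" for v using pc by auto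
  have relI: "(c,v) \<in> S\<^sup>+ \<Longrightarrow> (c,v) \<in> arb_rel V E" for v
    by (simp add: arb_rel_def S_def)
  have cp: "c \<in> p" using inp c by (auto simp: arb_rel_def Id_on_def)
  have inW: "v \<in> p \<Longrightarrow> v \<in> arb_carrier V \<Longrightarrow> fst v \<in> W" for v
    using carrier_fst[of v V] by (cases v) (auto simp: W_def in_chart_def)
  have cW: "fst c \<in> W" using inW[OF cp c] .
  have EsW: "\<forall>e\<in>Es. e \<subseteq> W" by (auto simp: Es_def W_def)
  have key: "(c,v) \<in> S\<^sup>+ \<Longrightarrow> (fst c, fst v) \<in> R\<^sup>*" for v
  proof (induction rule: trancl_induct)
    case (base y)
    from S_step[of c y V E] base have h: "{fst c, fst y} \<in> E" "y \<in> arb_carrier V"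
      by (auto simp: S_def)
    have "fst y \<in> W" using inW[OF _ h(2)] inp relI base by blast
    hence "{fst c, fst y} \<in> Es" using h(1) cW by (auto simp: Es_def W_def)
    then show ?case by (auto simp: R_def)
  next
    case (step y z)
    from S_step[of y z V E] step have h: "{fst y, fst z} \<in> E" "z \<in> arb_carrier V"
      by (auto simp: S_def)
    have "(c,z) \<in> S\<^sup>+" using step by auto
    hence zW: "fst z \<in> W" using inW[OF _ h(2)] inp relI by blast
    have "(c,y) \<in> S\<^sup>+" using step by auto
    hence yW: "fst y \<in> W" using inW inp relI S_step[of y z V E] step(2) by (auto simp: S_def)
    have "{fst y, fst z} \<in> Es" using h(1) yW zW by (auto simp: Es_def W_def)
    hence "(fst y, fst z) \<in> R" by (auto simp: R_def)
    then show ?case using step(3) by simp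
  qed
  have reach: "\<alpha> \<in> W \<Longrightarrow> (fst c, \<alpha>) \<in> R\<^sup>*" for \<alpha>
  proof -
    assume "\<alpha> \<in> W"
    then obtain x where "(\<alpha>,x) \<in> p" by (auto simp: W_def in_chart_def)
    hence "(c,(\<alpha>,x)) \<in> arb_rel V E" using inp by blast
    hence "(c,(\<alpha>,x)) \<in> Id_on (arb_carrier V) \<or> (c,(\<alpha>,x)) \<in> S\<^sup>+"
      by (auto simp: arb_rel_def S_def)
    thus ?thesis using key by (auto simp: Id_on_def)
  qed
  have symR: "sym R" by (auto simp: sym_def R_def insert_commute)
  have conn: "graph_connected W Es"
    unfolding graph_connected_def
  proof (intro ballI)
    fix a b assume a: "a \<in> W" and b: "b \<in> W"
    have "(a, fst c) \<in> R\<^sup>*" using reach[OF a] symR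
      by (metis sym_rtrancl symD)
    hence "(a,b) \<in> R\<^sup>*" using reach[OF b] by simp
    thus "\<exists>xs. walk Es xs \<and> set xs \<subseteq> W \<and> hd xs = a \<and> last xs = b"
      using rtr_walk[OF _ R_def EsW a] by blast
  qed
  have tree: "finite V" "is_graph V E" "graph_acyclic E"
    using assms(1) by (auto simp: is_tree_def)
  have "finite W" using tree(1) by (auto simp: W_def)
  moreover have "W \<noteq> {}" using cW by auto
  moreover have "is_graph W Es" using tree(2)
    unfolding is_graph_def Es_def W_def by fastforce
  moreover have "graph_acyclic Es" using tree(3)
    unfolding graph_acyclic_def is_cycle_def walk_def Es_def by blast
  ultimately show ?thesis using conn unfolding is_tree_def W_def Es_def by blast
qed

end
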